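(* Let $0<p<1$, $q=1-p$, let $\mathcal{B}=\{(x_i,t_i)\}_{i\in\mathbb{Z}}\subset\mathbb{Z}^2$ be a boundary set and $\tilde L$ the associated region, and let $(x^0,t^0)\in\tilde L$. Then the function on $\mathcal{B}$ $$\mathcal{G}^{\mathcal{B}}((x',t')|(x^0,t^0))=P_e^{\mathcal{B}}((x',t'))\,G((x',t')|(x^0,t^0)),\qquad (x',t')\in\mathcal{B},$$ defines a probability measure on $\mathcal{B}$, i.e. it is nonnegative and $\sum_{(x',t')\in\mathcal{B}}\mathcal{G}^{\mathcal{B}}((x',t')|(x^0,t^0))=1$.
   Context: Points of $\mathbb{Z}^2$ are written $(x,t)$ (space, time). A boundary set is $\mathcal{B}=\{(x_i,t_i)\}_{i\in\mathbb{Z}}$ such that for every $i\in\mathbb{Z}$ either $(x_{i+1},t_{i+1})=(x_i+1,t_i)$ or $(x_{i+1},t_{i+1})=(x_i,t_i-1)$. Its region is $\tilde L=\bigcup_{(x,t)\in\mathcal{B}}\{(x',t')\in\mathbb{Z}^2: x'\le x,\ t'\le t\}$, and $\tilde L^c=\mathbb{Z}^2\setminus\tilde L$. Single-step weights of the directed Bernoulli random walk: $W(\{(x,t),(x,t+1)\})=q$, $W(\{(x,t),(x+1,t+1)\})=p$, all other one-step weights zero. The one-particle Green function is $G((x,t)|(x^0,t^0))=\binom{t-t^0}{x-x^0}p^{x-x^0}q^{t-t^0-(x-x^0)}$ if $0\le x-x^0\le t-t^0$ and $0$ otherwise (the total weight of directed paths from $(x^0,t^0)$ to $(x,t)$). The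 exit probability at $(x,t)\in\mathcal{B}$ is $P_e^{\mathcal{B}}((x,t))=\sum_{x'':\,(x'',t+1)\in\tilde L^c}W(\{(x,t),(x'',t+1)\})$. *)

theory Defs
  imports "HOL-Analysis.Analysis"
begin

type_synonym pt = "int \<times> int"   (* (x, t) = (space, time) *)

definition boundary_set :: "(int \<Rightarrow> pt) \<Rightarrow> bool" where
  "boundary_set b \<longleftrightarrow> (\<forall>i. b (i+1) = (fst (b i) + 1, snd (b i)) \<or> b (i+1) = (fst (b i), snd (b i) - 1))"

definition region :: "(int \<Rightarrow> pt) \<Rightarrow> pt set" where
  "region b = (\<Union>z\<in>range b. {(x', t'). x' \<le> fst z \<and> t' \<le> snd z})"

definition W :: "real \<Rightarrow> pt \<Rightarrow> pt \<Rightarrow> real" where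
  "W p u v = (if v = (fst u, snd u + 1) then 1 - p
              else if v = (fst u + 1, snd u + 1) then p else 0)"

definition green :: "real \<Rightarrow> pt \<Rightarrow> pt \<Rightarrow> real" where
  "green p z z0 = (let dx = fst z - fst z0; dt = snd z - snd z0 in
     if 0 \<le> dx \<and> dx \<le> dt
     then real (nat dt choose nat dx) * p ^ nat dx * (1 - p) ^ nat (dt - dx) else 0)"

(* exit probability: sum of W((x,t),(x'',t+1)) over x'' with (x'',t+1) outside the region.
   W vanishes unless x'' \<in> {x, x+1}, so the sum is restricted to those (finitely many) x''. *)
definition exit_prob :: "real \<Rightarrow> (int \<Rightarrow> pt) \<Rightarrow> pt \<Rightarrow> real" where
  "exit_prob p b z = (\<Sum>x''\<in>{x''\<in>{fst z, fst z + 1}. (x'', snd z + 1) \<notin> region b}.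
       W p z (x'', snd z + 1))"

definition exit_green :: "real \<Rightarrow> (int \<Rightarrow> pt) \<Rightarrow> pt \<Rightarrow> pt \<Rightarrow> real" where
  "exit_green p b z z0 = exit_prob p b z * green p z z0"

end

theory Submission
  imports Defs
begin


lemma bs_diag:
  assumes "boundary_set b"
  shows "fst (b i) - snd (b i) = fst (b 0) - snd (b 0) + i"
proof (induction i rule: int_induct[where k=0])
  case base then show ?case by simp
next
  case (step1 i)
  from assms have "b (i+1) = (fst (b i) + 1, snd (b i)) \<or> b (i+1) = (fst (b i), snd (b i) - 1)"
    unfolding boundary_set_def by blast
  then show ?case using step1 by auto
next
  case (step2 i)
  from assms have "b (i-1+1) = (fst (b (i-1)) + 1, snd (b (i-1))) \<or> b (i-1+1) = (fst (b (i-1)), snd (b (i-1)) - 1)"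
    unfolding boundary_set_def by blast
  then show ?case using step2 by auto
qed

lemma bs_mono:
  assumes "boundary_set b" "i \<le> j"
  shows "fst (b i) \<le> fst (b j) \<and> snd (b j) \<le> snd (b i)"
  using assms(2)
proof (induction j rule: int_ge_induct)
  case base then show ?case by simp
next
  case (step j)
  from assms(1) have "b (j+1) = (fst (b j) + 1, snd (b j)) \<or> b (j+1) = (fst (b j), snd (b j) - 1)"
    unfolding boundary_set_def by blast
  then show ?case using step by auto
qed

lemma region_iff: "(x,t) \<in> region b \<longleftrightarrow> (\<exists>i. x \<le> fst (b i) \<and> t \<le> snd (b i))"
  unfolding region_def by auto

lemma region_down: "(x,t) \<in> region b \<Longrightarrow> x' \<le> x \<Longrightarrow> t' \<le> t \<Longrightarrow> (x',t') \<in> region b"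
  unfolding region_iff by (meson order_trans)

lemma range_in_region: "b i \<in> region b"
  by (cases "b i") (auto simp: region_iff intro: exI[of _ i])

lemma outside_exists:
  assumes "boundary_set b"
  shows "(fst (b 0) + 1, snd (b 0) + 1) \<notin> region b"
proof
  assume "(fst (b 0) + 1, snd (b 0) + 1) \<in> region b"
  then obtain i where i: "fst (b 0) + 1 \<le> fst (b i)" "snd (b 0) + 1 \<le> snd (b i)"
    unfolding region_iff by blast
  show False
  proof (cases "i \<le> 0")
    case True then show False using bs_mono[OF assms True] i by auto
  next
    case False then show False using bs_mono[OF assms, of 0 i] i by auto
  qed
qed

lemma corner_on_boundary:
  assumes bs: "boundary_set b" and inR: "(x,t) \<in> region b" and out: "(x+1,t+1) \<notin> region b"
  shows "(x,t) \<in> range b"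
proof -
  obtain i where i: "x \<le> fst (b i)" "t \<le> snd (b i)" using inR unfolding region_iff by blast
  define j where "j = (x - t) - (fst (b 0) - snd (b 0))"
  have dj: "fst (b j) - snd (b j) = x - t" using bs_diag[OF bs, of j] j_def by simp
  have di: "fst (b i) - snd (b i) = x - t + (i - j)" using bs_diag[OF bs, of i] bs_diag[OF bs, of j] j_def by simp
  have nog: "\<not> (x+1 \<le> fst (b k) \<and> t+1 \<le> snd (b k))" for k
    using out unfolding region_iff by blast
  have "fst (b j) = x"
  proof (rule ccontr)
    assume ne: "fst (b j) \<noteq> x"
    show False
    proof (cases "fst (b j) > x")
      case True then show False using nog[of j] dj by auto
    next
      case False
      then have lt: "fst (b j) < x" "snd (b j) < t" using ne dj by auto
      show False
      proof (cases "j \<le> i")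
        case True then show False using bs_mono[OF bs True] lt i by auto
      next
        case False then show False using bs_mono[OF bs, of i j] lt i by auto
      qed
    qed
  qed
  with dj have "b j = (x,t)" by (auto simp: prod_eq_iff)
  then show ?thesis by (metis rangeI)
qed



lemma green_level:
  "green p (a + int k, c + int n) (a,c) = (if k \<le> n then real (n choose k) * p^k * (1-p)^(n-k) else 0)"
  unfolding green_def Let_def by (auto simp: nat_diff_distrib)

lemma green_neg:
  "x < x0 \<Longrightarrow> green p (x, t) (x0,t0) = 0"
  unfolding green_def Let_def by auto

lemma green_below:
  "t < t0 \<Longrightarrow> green p (x, t) (x0,t0) = 0"
  unfolding green_def Let_def by auto

lemma green_nonneg: "0 \<le> p \<Longrightarrow> p \<le> 1 \<Longrightarrow> 0 \<le> green p z z0"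
  unfolding green_def Let_def by auto

lemma green_pascal:
  "green p (x, t0 + int (Suc n)) (x0,t0)
     = (1-p) * green p (x, t0 + int n) (x0,t0) + p * green p (x - 1, t0 + int n) (x0,t0)"
proof (cases "x < x0")
  case True then show ?thesis by (simp add: green_neg)
next
  case False
  then obtain k where k: "x = x0 + int k" by (metis add.commute le_add_diff_inverse linorder_not_le zle_iff_zadd)
  show ?thesis
  proof (cases k)
    case 0
    have "green p (x - 1, t0 + int n) (x0,t0) = 0" using k 0 by (simp add: green_neg)
    moreover have "green p (x, t0 + int (Suc n)) (x0,t0) = (1-p)^(Suc n)"
      using green_level[where a=x0 and k="0" and c=t0 and n="Suc n" and p=p] k 0 by simp
    moreover have "green p (x, t0 + int n) (x0,t0) = (1-p)^n"
      using green_level[where a=x0 and k="0" and c=t0 and n="n" and p=p] k 0 by simp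
    ultimately show ?thesis by simp
  next
    case (Suc m)
    have e1: "x - 1 = x0 + int m" using k Suc by simp
    have A: "green p (x, t0 + int (Suc n)) (x0,t0) = (if Suc m \<le> Suc n then real (Suc n choose Suc m) * p^Suc m * (1-p)^(Suc n - Suc m) else 0)"
      using green_level[where a=x0 and k="Suc m" and c=t0 and n="Suc n" and p=p] k Suc by simp
    have B: "green p (x, t0 + int n) (x0,t0) = (if Suc m \<le> n then real (n choose Suc m) * p^Suc m * (1-p)^(n - Suc m) else 0)"
      using green_level[where a=x0 and k="Suc m" and c=t0 and n="n" and p=p] k Suc by simp
    have C: "green p (x-1, t0 + int n) (x0,t0) = (if m \<le> n then real (n choose m) * p^m * (1-p)^(n - m) else 0)"
      using green_level[where a=x0 and k="m" and c=t0 and n="n" and p=p] e1 by simp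
    show ?thesis
    proof (cases "Suc m \<le> n")
      case True
      then obtain r where r: "n = Suc m + r" using le_Suc_ex by blast
      have A': "green p (x, t0 + int (Suc n)) (x0,t0) = (real (n choose m) + real (n choose Suc m)) * p^Suc m * (1-p)^(Suc r)"
        using A r by simp
      have B': "green p (x, t0 + int n) (x0,t0) = real (n choose Suc m) * p^Suc m * (1-p)^r"
        using B r by simp
      have C': "green p (x-1, t0 + int n) (x0,t0) = real (n choose m) * p^m * (1-p)^(Suc r)"
        using C r by simp
      show ?thesis unfolding A' B' C' by (simp add: algebra_simps)
    next
      case False
      show ?thesis
      proof (cases "m = n")
        case True then show ?thesis using A B C by simp
      next
        case False2: False
        then show ?thesis using A B C False by simp
      qed
    qed
  qed
qed

lemma exit_prob_formula:
  "exit_prob p b (x,t) = (if (x,t+1) \<notin> region b then 1-p else 0) + (if (x+1,t+1) \<notin> region b then p else 0)"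
proof -
  have W1: "W p (x,t) (x,t+1) = 1-p" by (simp add: W_def)
  have W2: "W p (x,t) (x+1,t+1) = p" by (simp add: W_def)
  let ?S = "{x''\<in>{x, x + 1}. (x'', t + 1) \<notin> region b}"
  have "exit_prob p b (x,t) = (\<Sum>x''\<in>?S. W p (x,t) (x'', t + 1))" unfolding exit_prob_def by simp
  moreover have "(\<Sum>x''\<in>?S. W p (x,t) (x'', t + 1)) = (if (x,t+1) \<notin> region b then 1-p else 0) + (if (x+1,t+1) \<notin> region b then p else 0)"
  proof (cases "(x,t+1) \<in> region b"; cases "(x+1,t+1) \<in> region b")
    assume "(x,t+1) \<in> region b" "(x+1,t+1) \<in> region b"
    then have "?S = {}" by auto
    then show ?thesis using \<open>(x,t+1) \<in> region b\<close> \<open>(x+1,t+1) \<in> region b\<close> by (subst \<open>?S = {}\<close>) simp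
  next
    assume a: "(x,t+1) \<in> region b" "(x+1,t+1) \<notin> region b"
    then have "?S = {x+1}" by auto
    then show ?thesis using a W2 by (subst \<open>?S = {x+1}\<close>) simp
  next
    assume a: "(x,t+1) \<notin> region b" "(x+1,t+1) \<in> region b"
    then have "?S = {x}" by auto
    then show ?thesis using a W1 by (subst \<open>?S = {x}\<close>) simp
  next
    assume a: "(x,t+1) \<notin> region b" "(x+1,t+1) \<notin> region b"
    then have "?S = {x, x+1}" by auto
    then show ?thesis using a W1 W2 by (subst \<open>?S = {x,x+1}\<close>) simp
  qed
  ultimately show ?thesis by simp
qed



lemma poly_geom_zero:
  fixes q :: real
  assumes "0 < q" "q < 1"
  shows "(\<lambda>n. real n ^ k * q ^ n) \<longlonglongrightarrow> 0"
proof (cases "k = 0")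
  case True then show ?thesis using LIMSEQ_power_zero[of q] assms by simp
next
  case False
  define r where "r = root k q"
  have r0: "0 < r" using assms False by (simp add: r_def)
  have r1: "r < 1" using assms False by (simp add: r_def)
  have rk: "r ^ k = q" using assms False by (simp add: r_def)
  have "(\<lambda>n. of_nat n * r ^ n) \<longlonglongrightarrow> (0::real)"
    using powser_times_n_limit_0[of r] r0 r1 by simp
  then have "(\<lambda>n. (of_nat n * r ^ n) ^ k) \<longlonglongrightarrow> (0::real) ^ k"
    by (rule tendsto_power)
  moreover have "(of_nat n * r ^ n) ^ k = real n ^ k * q ^ n" for n
    by (simp add: power_mult_distrib rk[symmetric] power_mult[symmetric] mult.commute)
  ultimately show ?thesis using False by (simp add: zero_power)
qed

lemma binom_term_zero:
  fixes p :: real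
  assumes "0 < p" "p < 1"
  shows "(\<lambda>n. real (n choose k) * p^k * (1-p)^(n-k)) \<longlonglongrightarrow> 0"
proof -
  define q where "q = 1 - p"
  have q0: "0 < q" and q1: "q < 1" using assms by (auto simp: q_def)
  have lim: "(\<lambda>n. (real n ^ k * q ^ n) / q ^ k) \<longlonglongrightarrow> 0"
    using tendsto_divide_zero[OF poly_geom_zero[OF q0 q1, of k], of "q^k"] by simp
  show ?thesis
  proof (rule tendsto_sandwich[OF _ _ tendsto_const lim])
    show "\<forall>\<^sub>F n in sequentially. 0 \<le> real (n choose k) * p ^ k * (1 - p) ^ (n - k)"
      using assms by auto
    show "\<forall>\<^sub>F n in sequentially. real (n choose k) * p ^ k * (1 - p) ^ (n - k) \<le> real n ^ k * q ^ n / q ^ k"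
    proof (rule eventually_sequentiallyI[of k])
      fix n assume n: "k \<le> n"
      have e: "q ^ n / q ^ k = q ^ (n - k)" using q0 n by (simp add: power_diff)
      have "real (n choose k) \<le> real n ^ k" using binomial_le_pow[OF n] by (metis of_nat_le_iff of_nat_power)
      moreover have "p ^ k \<le> 1" using assms by (simp add: power_le_one)
      ultimately have "real (n choose k) * p ^ k \<le> real n ^ k"
        by (metis assms(1) less_imp_le mult_le_cancel_left1 mult.commute of_nat_0_le_iff order_trans power_le_one zero_le_power mult_right_le_one_le)
      then have "real (n choose k) * p ^ k * q ^ (n - k) \<le> real n ^ k * q ^ (n - k)"
        using q0 by (simp add: mult_right_mono)
      then show "real (n choose k) * p ^ k * (1 - p) ^ (n - k) \<le> real n ^ k * q ^ n / q ^ k"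
        using e by (simp add: q_def times_divide_eq_right[symmetric])
    qed
  qed
qed



definition Bl :: "(int \<Rightarrow> pt) \<Rightarrow> int \<Rightarrow> int \<Rightarrow> nat \<Rightarrow> int set" where
  "Bl b x0 t0 n = {x \<in> {x0..x0 + int n}. (x, t0 + int n) \<in> region b}"

definition Am :: "real \<Rightarrow> (int \<Rightarrow> pt) \<Rightarrow> int \<Rightarrow> int \<Rightarrow> nat \<Rightarrow> real" where
  "Am p b x0 t0 n = (\<Sum>x\<in>Bl b x0 t0 n. green p (x, t0 + int n) (x0,t0))"

definition Em :: "real \<Rightarrow> (int \<Rightarrow> pt) \<Rightarrow> int \<Rightarrow> int \<Rightarrow> nat \<Rightarrow> real" where
  "Em p b x0 t0 n = (\<Sum>x\<in>Bl b x0 t0 n. exit_green p b (x, t0 + int n) (x0,t0))"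

lemma green_above:
  "x > x0 + int n \<Longrightarrow> green p (x, t0 + int n) (x0,t0) = 0"
  unfolding green_def Let_def by auto

lemma Am_step:
  "Am p b x0 t0 (Suc n) = Am p b x0 t0 n - Em p b x0 t0 n"
proof -
  let ?R = "region b"
  define g where "g m x = green p (x, t0 + int m) (x0,t0)" for m x
  define V where "V m = {x0..x0 + int m}" for m :: nat
  define t where "t = t0 + int n"
  have tS: "t0 + int (Suc n) = t + 1" by (simp add: t_def)
  define I1 where "I1 x = (if (x, t+1) \<in> ?R then 1 else (0::real))" for x
  have finV: "finite (V m)" for m by (simp add: V_def)
  have A1: "Am p b x0 t0 (Suc n) = (\<Sum>x\<in>V (Suc n). I1 x * g (Suc n) x)"
    unfolding Am_def Bl_def V_def[symmetric] g_def I1_def tS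
    by (auto simp: sum.inter_filter[OF finV] intro!: sum.cong)
  have A0: "Am p b x0 t0 n = (\<Sum>x\<in>V n. if (x,t) \<in> ?R then g n x else 0)"
    unfolding Am_def Bl_def V_def[symmetric] g_def t_def
    by (simp add: sum.inter_filter[OF finV])
  have E0: "Em p b x0 t0 n = (\<Sum>x\<in>V n. if (x,t) \<in> ?R then g n x * exit_prob p b (x,t) else 0)"
    unfolding Em_def Bl_def V_def[symmetric] g_def t_def exit_green_def
    by (auto simp: sum.inter_filter[OF finV] mult.commute intro!: sum.cong)
  have "(\<Sum>x\<in>V (Suc n). I1 x * g (Suc n) x)
      = (\<Sum>x\<in>V (Suc n). (1-p) * (I1 x * g n x) + p * (I1 x * g n (x-1)))"
    unfolding g_def by (intro sum.cong refl, subst green_pascal) (simp add: algebra_simps)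
  also have "\<dots> = (1-p) * (\<Sum>x\<in>V (Suc n). I1 x * g n x) + p * (\<Sum>x\<in>V (Suc n). I1 x * g n (x-1))"
    by (simp add: sum.distrib sum_distrib_left)
  also have "(\<Sum>x\<in>V (Suc n). I1 x * g n x) = (\<Sum>x\<in>V n. I1 x * g n x)"
  proof (rule sum.mono_neutral_right[OF finV])
    show "V n \<subseteq> V (Suc n)" by (auto simp: V_def)
    show "\<forall>i\<in>V (Suc n) - V n. I1 i * g n i = 0"
      by (auto simp: V_def g_def green_above)
  qed
  also have "(\<Sum>x\<in>V (Suc n). I1 x * g n (x-1)) = (\<Sum>y\<in>{x0-1..x0+int n}. I1 (y+1) * g n y)"
    by (rule sum.reindex_bij_witness[where i="\<lambda>y. y+1" and j="\<lambda>x. x-1"]) (auto simp: V_def)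
  also have "\<dots> = (\<Sum>y\<in>V n. I1 (y+1) * g n y)"
  proof (rule sum.mono_neutral_right)
    show "V n \<subseteq> {x0-1..x0+int n}" by (auto simp: V_def)
    show "\<forall>i\<in>{x0-1..x0+int n} - V n. I1 (i+1) * g n i = 0"
      by (auto simp: V_def g_def green_neg)
  qed simp
  finally have A1': "Am p b x0 t0 (Suc n) = (\<Sum>x\<in>V n. g n x * ((1-p) * I1 x + p * I1 (x+1)))"
    using A1 by (simp add: sum_distrib_left sum.distrib[symmetric] algebra_simps)
  have pw: "g n x * ((1-p) * I1 x + p * I1 (x+1))
       = (if (x,t) \<in> ?R then g n x else 0) - (if (x,t) \<in> ?R then g n x * exit_prob p b (x,t) else 0)" for x
  proof (cases "(x,t) \<in> ?R")
    case True then show ?thesis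
      by (cases "(x,t+1) \<in> ?R"; cases "(x+1,t+1) \<in> ?R") (simp_all add: exit_prob_formula I1_def algebra_simps)
  next
    case False
    then have "(x, t+1) \<notin> ?R" "(x+1, t+1) \<notin> ?R" using region_down[of _ _ b x t] by force+
    then show ?thesis using False by (simp add: I1_def)
  qed
  show ?thesis unfolding A1' A0 E0 pw by (simp add: sum_subtractf)
qed



lemma exit_prob_nonneg: "0 \<le> p \<Longrightarrow> p \<le> 1 \<Longrightarrow> 0 \<le> exit_prob p b z"
  by (cases z) (simp add: exit_prob_formula)

lemma exit_green_nonneg: "0 \<le> p \<Longrightarrow> p \<le> 1 \<Longrightarrow> 0 \<le> exit_green p b z z0"
  unfolding exit_green_def by (intro mult_nonneg_nonneg exit_prob_nonneg green_nonneg)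

lemma Am0: "(x0,t0) \<in> region b \<Longrightarrow> Am p b x0 t0 0 = 1"
proof -
  assume a: "(x0,t0) \<in> region b"
  have "Bl b x0 t0 0 = {x0}" using a by (auto simp: Bl_def)
  then show ?thesis unfolding Am_def using green_level[of p x0 0 t0 0] by simp
qed

lemma Em_partial: "(x0,t0) \<in> region b \<Longrightarrow> (\<Sum>n<N. Em p b x0 t0 n) = 1 - Am p b x0 t0 N"
  by (induction N) (simp_all add: Am0 Am_step)

lemma Am_nonneg: "0 \<le> p \<Longrightarrow> p \<le> 1 \<Longrightarrow> 0 \<le> Am p b x0 t0 N"
  unfolding Am_def by (intro sum_nonneg green_nonneg)

lemma Em_nonneg: "0 \<le> p \<Longrightarrow> p \<le> 1 \<Longrightarrow> 0 \<le> Em p b x0 t0 N"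
  unfolding Em_def by (intro sum_nonneg exit_green_nonneg)

lemma Am_tendsto:
  fixes p :: real
  assumes p: "0 < p" "p < 1" and bs: "boundary_set b"
  shows "(Am p b x0 t0 \<longlongrightarrow> 0) sequentially"
proof -
  define a where "a = fst (b 0) + 1"
  define c where "c = snd (b 0) + 1"
  have out: "(a,c) \<notin> region b" using outside_exists[OF bs] by (simp add: a_def c_def)
  define K where "K = nat (a - x0)"
  define T where "T N = (\<Sum>k<K. real (N choose k) * p^k * (1-p)^(N-k))" for N
  have lim: "T \<longlonglongrightarrow> 0" unfolding T_def
    by (rule tendsto_null_sum) (rule binom_term_zero[OF p])
  show ?thesis
  proof (rule tendsto_sandwich[OF _ _ tendsto_const lim])
    show "\<forall>\<^sub>F N in sequentially. 0 \<le> Am p b x0 t0 N"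
      using p by (intro always_eventually allI Am_nonneg) auto
    show "\<forall>\<^sub>F N in sequentially. Am p b x0 t0 N \<le> T N"
    proof (rule eventually_sequentiallyI[of "nat (c - t0)"])
      fix N assume N: "nat (c - t0) \<le> N"
      have sub: "Bl b x0 t0 N \<subseteq> {x0..<x0 + int K}"
      proof
        fix x assume x: "x \<in> Bl b x0 t0 N"
        then have xR: "(x, t0 + int N) \<in> region b" "x0 \<le> x" by (auto simp: Bl_def)
        have "x < a"
        proof (rule ccontr)
          assume "\<not> x < a"
          then have "(a,c) \<in> region b" using region_down[OF xR(1), of a c] N by auto
          with out show False by simp
        qed
        then show "x \<in> {x0..<x0 + int K}" using xR by (auto simp: K_def)
      qed
      have "Am p b x0 t0 N \<le> (\<Sum>x\<in>{x0..<x0 + int K}. green p (x, t0 + int N) (x0,t0))"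
        unfolding Am_def using p by (intro sum_mono2 sub green_nonneg) auto
      also have "\<dots> = (\<Sum>k<K. green p (x0 + int k, t0 + int N) (x0,t0))"
        by (rule sum.reindex_bij_witness[where j="\<lambda>x. nat (x - x0)" and i="\<lambda>k. x0 + int k"]) auto
      also have "\<dots> = T N" unfolding T_def
        by (intro sum.cong refl) (simp add: green_level)
      finally show "Am p b x0 t0 N \<le> T N" .
    qed
  qed
qed



theorem proposition3:
  fixes p :: real and b :: "int \<Rightarrow> int \<times> int" and z0 :: "int \<times> int"
  assumes "0 < p" "p < 1"
    and "boundary_set b"
    and "z0 \<in> region b"
  shows "(\<forall>z\<in>range b. exit_green p b z z0 \<ge> 0)
         \<and> ((\<lambda>z. exit_green p b z z0) has_sum 1) (range b)"
proof
  have p0: "0 \<le> p" "p \<le> 1" using assms by auto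
  show "\<forall>z\<in>range b. exit_green p b z z0 \<ge> 0" using exit_green_nonneg[OF p0] by blast
  obtain x0 t0 where z0: "z0 = (x0,t0)" by (cases z0)
  have z0R: "(x0,t0) \<in> region b" using assms(4) z0 by simp
  define g where "g z = exit_green p b z z0" for z
  define S where "S = (SIGMA n:UNIV. Bl b x0 t0 n)"
  define h where "h = (\<lambda>(n::nat, x::int). (x, t0 + int n))"
  have gnn: "0 \<le> g z" for z unfolding g_def by (rule exit_green_nonneg[OF p0])
  have finB: "finite (Bl b x0 t0 n)" for n by (rule finite_subset[of _ "{x0..x0+int n}"]) (auto simp: Bl_def)
  have inner: "((\<lambda>x. (g \<circ> h) (n, x)) has_sum Em p b x0 t0 n) (Bl b x0 t0 n)" for n
    unfolding Em_def g_def h_def z0 using has_sum_finite[OF finB] by simp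
  have "(\<lambda>N. \<Sum>n<N. Em p b x0 t0 n) \<longlonglongrightarrow> 1 - 0"
    unfolding Em_partial[OF z0R] by (intro tendsto_diff tendsto_const Am_tendsto assms)
  then have "Em p b x0 t0 sums 1" by (simp add: sums_def)
  then have outer: "(Em p b x0 t0 has_sum 1) UNIV"
    by (rule sums_nonneg_imp_has_sum) (rule Em_nonneg[OF p0])
  have summ: "(g \<circ> h) summable_on S"
  proof (rule nonneg_bdd_above_summable_on)
    show "\<And>x. x \<in> S \<Longrightarrow> 0 \<le> (g \<circ> h) x" using gnn by simp
    show "bdd_above (sum (g \<circ> h) ` {F. F \<subseteq> S \<and> finite F})"
    proof (rule bdd_aboveI[of _ 1])
      fix y assume "y \<in> sum (g \<circ> h) ` {F. F \<subseteq> S \<and> finite F}"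
      then obtain F where F: "F \<subseteq> S" "finite F" "y = sum (g \<circ> h) F" by blast
      define N where "N = Suc (Max (insert 0 (fst ` F)))"
      have FN: "F \<subseteq> (SIGMA n:{..<N}. Bl b x0 t0 n)"
      proof
        fix z assume z: "z \<in> F"
        have "fst z \<le> Max (insert 0 (fst ` F))" using F(2) z by (intro Max_ge) auto
        then show "z \<in> (SIGMA n:{..<N}. Bl b x0 t0 n)" using F(1) z by (cases z) (auto simp: S_def N_def)
      qed
      have "y \<le> sum (g \<circ> h) (SIGMA n:{..<N}. Bl b x0 t0 n)"
        unfolding F(3) by (rule sum_mono2) (use FN finB gnn in auto)
      also have "\<dots> = (\<Sum>n<N. \<Sum>x\<in>Bl b x0 t0 n. (g \<circ> h) (n,x))"
        by (subst sum.Sigma) (auto simp: finB split_def)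
      also have "\<dots> = (\<Sum>n<N. Em p b x0 t0 n)"
        unfolding Em_def g_def h_def z0 by simp
      also have "\<dots> = 1 - Am p b x0 t0 N" by (rule Em_partial[OF z0R])
      also have "\<dots> \<le> 1" using Am_nonneg[OF p0] by simp
      finally show "y \<le> 1" .
    qed
  qed
  have "((g \<circ> h) has_sum 1) S"
    unfolding S_def by (rule has_sum_SigmaI[OF inner outer]) (use summ S_def in \<open>simp add: comp_def\<close>)
  moreover have "inj_on h S" unfolding h_def S_def by (auto simp: inj_on_def)
  ultimately have hs: "(g has_sum 1) (h ` S)" by (simp add: has_sum_reindex)
  have "(g has_sum 1) (h ` S) \<longleftrightarrow> (g has_sum 1) (range b)"
  proof (rule has_sum_cong_neutral)
    fix z assume z: "z \<in> range b - h ` S"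
    obtain x1 t1 where zz: "z = (x1,t1)" by (cases z)
    have zR: "z \<in> region b" using z range_in_region by blast
    show "g z = 0"
    proof (cases "t1 < t0")
      case True then show ?thesis by (simp add: g_def exit_green_def zz z0 green_below)
    next
      case False
      define n where "n = nat (t1 - t0)"
      have tn: "t1 = t0 + int n" using False n_def by simp
      show ?thesis
      proof (cases "x1 < x0 \<or> x1 > x0 + int n")
        case True then show ?thesis
          by (auto simp: g_def exit_green_def zz z0 tn green_neg green_above)
      next
        case False
        then have "(n, x1) \<in> S" using zR by (auto simp: S_def Bl_def zz tn)
        moreover have "h (n, x1) = z" by (simp add: h_def zz tn)
        ultimately show ?thesis using z by blast
      qed
    qed
  next
    fix z assume z: "z \<in> h ` S - range b"
    then obtain n x1 where nx: "(n,x1) \<in> S" "z = (x1, t0 + int n)" by (auto simp: h_def)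
    define t where "t = t0 + int n"
    have zR: "(x1, t) \<in> region b" using nx by (simp add: S_def Bl_def t_def)
    have "exit_prob p b (x1, t) = 0"
    proof (rule ccontr)
      assume ne: "exit_prob p b (x1, t) \<noteq> 0"
      have "(x1+1, t+1) \<notin> region b"
      proof
        assume in1: "(x1+1, t+1) \<in> region b"
        then have "(x1, t+1) \<in> region b" using region_down[OF in1, of x1 "t+1"] by simp
        with in1 ne show False by (simp add: exit_prob_formula)
      qed
      then have "(x1,t) \<in> range b" using corner_on_boundary[OF assms(3) zR] by simp
      with z nx show False by (simp add: t_def)
    qed
    then show "g z = 0" by (simp add: g_def exit_green_def nx(2) t_def[symmetric])
  qed simp
  with hs show "((\<lambda>z. exit_green p b z z0) has_sum 1) (range b)" by (simp add: g_def[abs_def])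
qed


end
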